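(* Let $A$ be a unital $*$-ring which is not $*$-symmetric. Then for every integer $n>1$, the matrix ring $\mathbb M_n(A)$ with the $*$-transpose involution is not a Rickart $*$-ring.
   Context: A unital $*$-ring $A$ is $*$-symmetric if $1+xx^*$ is invertible for every $x\in A$. The $*$-transpose involution on $\mathbb M_n(A)$ is $(a_{ij})^*=(a_{ji}^* )$. A Rickart $*$-ring is a $*$-ring in which the right annihilator of every element is generated as a right ideal by a projection ($p=p^2=p^*$). *)

theory Defs
  imports "HOL-Analysis.Analysis"
begin

text \<open>Unital *-rings: unital (not necessarily commutative) rings with an involution
  that is additive, anti-multiplicative and of order two.\<close>
class star_ring = ring_1 +
  fixes star :: "'a \<Rightarrow> 'a"
  assumes star_add: "star (x + y) = star x + star y"
    and star_mult: "star (x * y) = star y * star x"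
    and star_star: "star (star x) = x"

text \<open>A unital *-ring is *-symmetric if 1 + x x* is (two-sided) invertible for every x.\<close>
definition star_symmetric :: "'a::star_ring itself \<Rightarrow> bool" where
  "star_symmetric _ \<longleftrightarrow>
     (\<forall>x::'a. \<exists>y. (1 + x * star x) * y = 1 \<and> y * (1 + x * star x) = 1)"

text \<open>The Rickart condition for a ring (carrier = whole type) with multiplication mul,
  zero z and involution st: the right annihilator of every element is the principal
  right ideal generated by a projection.\<close>
definition rickart_star :: "('b \<Rightarrow> 'b \<Rightarrow> 'b) \<Rightarrow> 'b \<Rightarrow> ('b \<Rightarrow> 'b) \<Rightarrow> bool" where
  "rickart_star mul z st \<longleftrightarrow>
     (\<forall>x. \<exists>p. mul p p = p \<and> st p = p \<and> {y. mul x y = z} = {mul p r | r. True})"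

text \<open>The *-transpose involution on square matrices over a *-ring.\<close>
definition mat_star :: "'a::star_ring ^'n^'n \<Rightarrow> 'a ^'n^'n" where
  "mat_star M = (\<chi> i j. star (M $ j $ i))"

end

theory Submission
  imports Defs
begin

lemma star_zero: "star (0::'a::star_ring) = 0"
  using star_add[of "0::'a" 0] by simp

lemma star_neg: "star (- y::'a::star_ring) = - star y"
proof -
  have "star y + star (-y) = 0" using star_add[of y "-y"] star_zero[where 'a='a] by simp
  then show ?thesis by (metis neg_eq_iff_add_eq_0)
qed

lemma star_one: "star (1::'a::star_ring) = 1"
proof -
  have "star (star 1 * (1::'a)) = star 1 * star (star 1)" by (rule star_mult)
  then show ?thesis by (simp add: star_star)
qed

lemma sum_two_left:
  fixes a b :: "'n::finite" and u v :: "'a::semiring_1"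
  assumes "a \<noteq> b"
  shows "(\<Sum>k\<in>UNIV. (if k = a then u else if k = b then v else 0) * f k) = u * f a + v * f b"
proof -
  have "(\<Sum>k\<in>UNIV. (if k = a then u else if k = b then v else 0) * f k)
      = (\<Sum>k\<in>UNIV. (if k = a then u * f a else 0) + (if k = b then v * f b else 0))"
    by (rule sum.cong) (use assms in auto)
  also have "\<dots> = u * f a + v * f b" by (simp add: sum.distrib)
  finally show ?thesis .
qed

lemma sum_two_right:
  fixes a b :: "'n::finite" and u v :: "'a::semiring_1"
  assumes "a \<noteq> b"
  shows "(\<Sum>k\<in>UNIV. f k * (if k = a then u else if k = b then v else 0)) = f a * u + f b * v"
proof -
  have "(\<Sum>k\<in>UNIV. f k * (if k = a then u else if k = b then v else 0))
      = (\<Sum>k\<in>UNIV. (if k = a then f a * u else 0) + (if k = b then f b * v else 0))"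
    by (rule sum.cong) (use assms in auto)
  also have "\<dots> = f a * u + f b * v" by (simp add: sum.distrib)
  finally show ?thesis .
qed

theorem mainTheorem18:
  assumes "\<not> star_symmetric TYPE('a::star_ring)"
    and "CARD('n::finite) > 1"
  shows "\<not> rickart_star
           ((**) :: 'a ^'n^'n \<Rightarrow> 'a ^'n^'n \<Rightarrow> 'a ^'n^'n) 0 (mat_star :: 'a ^'n^'n \<Rightarrow> _)"
proof
  assume R: "rickart_star ((**) :: 'a ^'n^'n \<Rightarrow> 'a ^'n^'n \<Rightarrow> 'a ^'n^'n) 0 (mat_star :: 'a ^'n^'n \<Rightarrow> _)"
  obtain y :: 'a where ny: "\<not> (\<exists>z. (1 + y * star y) * z = 1 \<and> z * (1 + y * star y) = 1)"
    using assms(1) unfolding star_symmetric_def by blast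
  define x where "x = star y"
  have sx: "star x * x = y * star y" by (simp add: x_def star_star)
  obtain a b :: 'n where ab: "a \<noteq> b"
  proof -
    have "\<exists>a b::'n. a \<noteq> b"
    proof (rule ccontr)
      assume "\<not> (\<exists>a b::'n. a \<noteq> b)"
      then have "UNIV = {undefined::'n}" by blast
      then have "CARD('n) = card {undefined::'n}" by (rule arg_cong)
      then show False using assms(2) by simp
    qed
    then show ?thesis using that by blast
  qed
  define X :: "'a^'n^'n" where "X = (\<chi> i k. if i = a then (if k = a then 1 else if k = b then x else 0) else 0)"
  define Z :: "'a^'n^'n" where "Z = (\<chi> k j. if j = a then (if k = a then - x else if k = b then 1 else 0) else 0)"
  obtain p :: "'a^'n^'n" where pp: "p ** p = p" and ps: "mat_star p = p"
    and ann: "{Y. X ** Y = 0} = {p ** (r::'a^'n^'n) | r. True}"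
  proof -
    have "\<exists>p. p ** p = p \<and> mat_star p = p \<and> {Y. X ** Y = 0} = {p ** (r::'a^'n^'n) | r. True}"
      using R[unfolded rickart_star_def, THEN spec[of _ X]] .
    then show ?thesis using that by (elim exE conjE)
  qed
  have XZ: "X ** Z = 0"
  proof -
    have "(X ** Z) $ i $ j = 0" for i j
    proof (cases "i = a \<and> j = a")
      case True
      then show ?thesis
        unfolding matrix_matrix_mult_def X_def Z_def using sum_two_left[OF ab, of 1 x "\<lambda>k. if k = a then - x else if k = b then 1 else 0"] ab
        by simp
    next
      case False
      then show ?thesis unfolding matrix_matrix_mult_def X_def Z_def by auto
    qed
    then show ?thesis by (simp add: vec_eq_iff)
  qed
  then have "Z \<in> {p ** (r::'a^'n^'n) | r. True}" using ann by blast
  then obtain r where Zr: "Z = p ** r" by blast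
  have pZ: "p ** Z = Z" using Zr pp by (simp add: matrix_mul_assoc)
  have "p ** mat 1 \<in> {p ** (r::'a^'n^'n) | r. True}" by blast
  then have "p \<in> {p ** (r::'a^'n^'n) | r. True}" by (simp add: matrix_mul_rid)
  then have "p \<in> {Y. X ** Y = 0}" using ann by simp
  then have Xp: "X ** p = 0" by simp
  have e1: "p $ a $ b + x * p $ b $ b = 0"
  proof -
    have "(X ** p) $ a $ b = 0" using Xp by simp
    then show ?thesis unfolding matrix_matrix_mult_def X_def
      using sum_two_left[OF ab, of 1 x "\<lambda>k. p $ k $ b"] by simp
  qed
  have sym: "star (p $ j $ i) = p $ i $ j" for i j
    using arg_cong[OF ps, of "\<lambda>M. M $ i $ j"] unfolding mat_star_def by simp
  have pab: "p $ a $ b = - (x * p $ b $ b)" using e1 by (simp add: eq_neg_iff_add_eq_0)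
  have pba: "p $ b $ a = - (p $ b $ b * star x)"
  proof -
    have "p $ b $ a = star (p $ a $ b)" using sym by simp
    also have "\<dots> = - (star (p $ b $ b) * star x)" by (simp add: pab star_neg star_mult)
    also have "\<dots> = - (p $ b $ b * star x)" using sym[of b b] by simp
    finally show ?thesis .
  qed
  have e2: "p $ b $ a * (- x) + p $ b $ b * 1 = 1"
  proof -
    have "(p ** Z) $ b $ a = 1" using pZ ab by (simp add: Z_def)
    then show ?thesis unfolding matrix_matrix_mult_def Z_def
      using sum_two_right[OF ab, of "\<lambda>k. p $ b $ k" "- x" 1] by simp
  qed
  define q where "q = p $ b $ b"
  have L: "q * (1 + star x * x) = 1"
    using e2 unfolding pba q_def by (simp add: algebra_simps)
  have sq: "star q = q" using sym[of b b] by (simp add: q_def)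
  have "star (q * (1 + star x * x)) = star 1" using L by simp
  then have Rr: "(1 + star x * x) * q = 1"
    by (simp add: star_mult star_add star_one sq star_star)
  show False using ny L Rr unfolding sx by blast
qed

end
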